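(* \[\inf_{\substack{F_S,F_B\in\Delta_{L^1}(\mathbb{R}_+)\\ \mathbb{E}[(S-B)_+]=0}}\ \sup_{p\in\mathbb{R}_+}\frac{\mathsf{W}(p;F_S,F_B)}{\mathsf{OPT\text{-}W}(F_S,F_B)}=\frac34 .\] In particular, whenever $\mathbb{E}[(S-B)_+]=0$ (the seller's value is almost surely at most the buyer's value), for every $\eta>0$ some fixed price achieves at least $(3/4-\eta)\,\mathsf{OPT\text{-}W}(F_S,F_B)$.
   Context: Asymmetric bilateral trade: seller's value $S\sim F_S$ and buyer's value $B\sim F_B$ independent, both distributions on $[0,\infty)$ with finite means (not both zero). Posting price $p$, trade iff $B>p\ge S$. $\mathsf{W}(p;F_S,F_B)=\mathbb{E}[S+(B-S)\mathbf 1_{B>p\ge S}]$, $\mathsf{OPT\text{-}W}(F_S,F_B)=\mathbb{E}[S+(B-S)\mathbf 1_{B>S}]=\mathbb{E}[\max\{B,S\}]$. $(x)_+=\max\{x,0\}$. *)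

theory Defs
  imports "HOL-Probability.Probability"
begin

definition nonneg_L1_dist :: "real measure \<Rightarrow> bool" where
  "nonneg_L1_dist M \<longleftrightarrow> sets M = sets borel \<and> prob_space M \<and>
     (AE x in M. 0 \<le> x) \<and> integrable M (\<lambda>x. x)"

text \<open>Welfare of posted price p: S and B independent, S ~ FS, B ~ FB; trade iff B > p >= S.\<close>
definition W :: "real \<Rightarrow> real measure \<Rightarrow> real measure \<Rightarrow> real" where
  "W p FS FB = (\<integral>sb. (case sb of (s, b) \<Rightarrow>
       s + (b - s) * indicator {(s', b'). b' > p \<and> p \<ge> s'} (s, b)) \<partial>(FS \<Otimes>\<^sub>M FB))"

definition OPT_W :: "real measure \<Rightarrow> real measure \<Rightarrow> real" where
  "OPT_W FS FB = (\<integral>sb. (case sb of (s, b) \<Rightarrow>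
       s + (b - s) * indicator {(s', b'). b' > s'} (s, b)) \<partial>(FS \<Otimes>\<^sub>M FB))"

definition gains_from_reverse :: "real measure \<Rightarrow> real measure \<Rightarrow> real" where
  "gains_from_reverse FS FB = (\<integral>sb. (case sb of (s, b) \<Rightarrow> max (s - b) 0) \<partial>(FS \<Otimes>\<^sub>M FB))"

definition admissible :: "(real measure \<times> real measure) set" where
  "admissible = {(FS, FB). nonneg_L1_dist FS \<and> nonneg_L1_dist FB \<and>
      \<not> ((\<integral>x. x \<partial>FS) = 0 \<and> (\<integral>x. x \<partial>FB) = 0) \<and>
      gains_from_reverse FS FB = 0}"

end

theory Submission imports Defs begin

definition wv :: "real \<Rightarrow> real \<Rightarrow> real \<Rightarrow> real" where
  "wv p s b = s + (b - s) * (if b > p \<and> p \<ge> s then 1 else 0)"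

lemma arith_key:
  fixes p q E :: real
  assumes "0 \<le> p" "0 \<le> q" "q \<le> 1" "0 \<le> E"
  shows "p * (1 - q) \<le> E / 4 \<or> q * (E - p) \<le> E / 4"
proof (rule ccontr)
  assume "\<not> ?thesis"
  then have x: "p * (1 - q) > E / 4" and y: "q * (E - p) > E / 4" by auto
  have "(E/4) * (E/4) < (p * (1 - q)) * (q * (E - p))"
    using x y assms by (intro mult_strict_mono) auto
  also have "\<dots> = (q * (1 - q)) * (p * (E - p))" by (simp add: algebra_simps)
  also have "\<dots> \<le> (1/4) * (p * (E - p))"
  proof (rule mult_right_mono)
    have h: "0 \<le> (q - 1/2) * (q - 1/2)" by simp
    then show "q * (1 - q) \<le> 1/4" by (simp add: algebra_simps)
    have "0 < q * (E - p)" using y assms by linarith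
    then have "0 < E - p" using assms by (simp add: zero_less_mult_iff)
    then show "0 \<le> p * (E - p)" using assms by simp
  qed
  also have "\<dots> \<le> (1/4) * (E/2 * (E/2))"
  proof -
    have "0 \<le> (p - E/2) * (p - E/2)" by simp
    then have "p * (E - p) \<le> E/2 * (E/2)" by (simp add: algebra_simps)
    then show ?thesis by simp
  qed
  finally show False by simp
qed

context
  fixes FS FB :: "real measure"
  assumes dS: "nonneg_L1_dist FS" and dB: "nonneg_L1_dist FB"
begin

lemma sS[measurable_cong]: "sets FS = sets borel" using dS by (simp add: nonneg_L1_dist_def)
lemma sB[measurable_cong]: "sets FB = sets borel" using dB by (simp add: nonneg_L1_dist_def)
lemma spS[simp]: "space FS = UNIV" using sets_eq_imp_space_eq[OF sS] by simp
lemma spB[simp]: "space FB = UNIV" using sets_eq_imp_space_eq[OF sB] by simp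

lemma pps: "pair_prob_space FS FB"
  using dS dB by (simp add: nonneg_L1_dist_def pair_prob_space_def pair_sigma_finite_def prob_space_imp_sigma_finite)

interpretation P: pair_prob_space FS FB by (rule pps)

lemma pS1[simp]: "measure FS UNIV = 1" using P.M1.prob_space by simp
lemma pB1[simp]: "measure FB UNIV = 1" using P.M2.prob_space by simp

lemma iS: "integrable FS (\<lambda>x. x)" using dS by (simp add: nonneg_L1_dist_def)
lemma iB: "integrable FB (\<lambda>x. x)" using dB by (simp add: nonneg_L1_dist_def)
lemma aS: "AE x in FS. 0 \<le> x" using dS by (simp add: nonneg_L1_dist_def)
lemma aB: "AE x in FB. 0 \<le> x" using dB by (simp add: nonneg_L1_dist_def)

lemma integ_base: "integrable (FS \<Otimes>\<^sub>M FB) (\<lambda>z. \<bar>fst z\<bar> + \<bar>snd z\<bar> + 1)"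
proof (rule P.Fubini_integrable)
  show "(\<lambda>z. \<bar>fst z\<bar> + \<bar>snd z\<bar> + 1) \<in> borel_measurable (FS \<Otimes>\<^sub>M FB)" by measurable
  have iBa: "integrable FB (\<lambda>x. \<bar>x\<bar>)" using iB by (rule integrable_abs)
  have iSa: "integrable FS (\<lambda>x. \<bar>x\<bar>)" using iS by (rule integrable_abs)
  have e: "(\<integral>y. norm (\<bar>fst (x, y)\<bar> + \<bar>snd (x, y)\<bar> + 1) \<partial>FB) = \<bar>x\<bar> + (\<integral>y. \<bar>y\<bar> \<partial>FB) + 1" for x
  proof -
    have "(\<integral>y. norm (\<bar>fst (x, y)\<bar> + \<bar>snd (x, y)\<bar> + 1) \<partial>FB) = (\<integral>y. \<bar>x\<bar> + \<bar>y\<bar> + 1 \<partial>FB)"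
      by (rule Bochner_Integration.integral_cong[OF refl]) auto
    also have "\<dots> = (\<integral>y. \<bar>x\<bar> \<partial>FB) + (\<integral>y. \<bar>y\<bar> \<partial>FB) + (\<integral>y. 1 \<partial>FB)"
      using iBa by (simp add: integral_add)
    finally show ?thesis by (simp add: P.M2.prob_space)
  qed
  show "integrable FS (\<lambda>x. \<integral>y. norm (\<bar>fst (x, y)\<bar> + \<bar>snd (x, y)\<bar> + 1) \<partial>FB)"
    unfolding e using iSa by (intro Bochner_Integration.integrable_add) auto
  show "AE x in FS. integrable FB (\<lambda>y. \<bar>fst (x, y)\<bar> + \<bar>snd (x, y)\<bar> + 1)"
    using iBa by (intro AE_I2) (auto intro!: Bochner_Integration.integrable_add)
qed

lemma integ_bound:
  fixes g :: "real \<times> real \<Rightarrow> real"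
  assumes m: "g \<in> borel_measurable (FS \<Otimes>\<^sub>M FB)"
    and b: "\<And>z. \<bar>g z\<bar> \<le> C * (\<bar>fst z\<bar> + \<bar>snd z\<bar> + 1)"
  shows "integrable (FS \<Otimes>\<^sub>M FB) g"
proof (rule Bochner_Integration.integrable_bound[of _ "\<lambda>z. C * (\<bar>fst z\<bar> + \<bar>snd z\<bar> + 1)"])
  show "integrable (FS \<Otimes>\<^sub>M FB) (\<lambda>z. C * (\<bar>fst z\<bar> + \<bar>snd z\<bar> + 1))"
    using integ_base by (rule integrable_mult_right)
  show "g \<in> borel_measurable (FS \<Otimes>\<^sub>M FB)" by fact
  show "AE x in FS \<Otimes>\<^sub>M FB. norm (g x) \<le> norm (C * (\<bar>fst x\<bar> + \<bar>snd x\<bar> + 1))"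
    using b by (intro AE_I2) (smt (verit) real_norm_def)
qed

lemma fub:
  fixes g :: "real \<times> real \<Rightarrow> real"
  assumes "integrable (FS \<Otimes>\<^sub>M FB) g"
  shows "integral\<^sup>L (FS \<Otimes>\<^sub>M FB) g = (\<integral>s. (\<integral>b. g (s, b) \<partial>FB) \<partial>FS)"
  using P.integral_fst'[OF assms] by simp

lemma AE_lift:
  assumes "AE s in FS. AE b in FB. Q s b" "{z \<in> space (FS \<Otimes>\<^sub>M FB). Q (fst z) (snd z)} \<in> sets (FS \<Otimes>\<^sub>M FB)"
  shows "AE z in FS \<Otimes>\<^sub>M FB. Q (fst z) (snd z)"
  using P.AE_pair_measure[of "\<lambda>z. Q (fst z) (snd z)"] assms by simp

lemma W_eq: "W p FS FB = (\<integral>z. wv p (fst z) (snd z) \<partial>(FS \<Otimes>\<^sub>M FB))"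
  unfolding W_def wv_def by (rule Bochner_Integration.integral_cong[OF refl]) (auto split: prod.splits simp: indicator_def)

lemma OPT_eq: "OPT_W FS FB = (\<integral>z. max (fst z) (snd z) \<partial>(FS \<Otimes>\<^sub>M FB))"
  unfolding OPT_W_def by (rule Bochner_Integration.integral_cong[OF refl]) (auto split: prod.splits simp: indicator_def max_def)

lemma wv_meas: "(\<lambda>z. wv p (fst z) (snd z)) \<in> borel_measurable (FS \<Otimes>\<^sub>M FB)"
  unfolding wv_def by measurable

lemma wv_int: "integrable (FS \<Otimes>\<^sub>M FB) (\<lambda>z. wv p (fst z) (snd z))"
  by (rule integ_bound[OF wv_meas, where C=2]) (auto simp: wv_def)

lemma snd_int: "integrable (FS \<Otimes>\<^sub>M FB) snd"
  by (rule integ_bound[of _ 1]) auto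

lemma fst_int: "integrable (FS \<Otimes>\<^sub>M FB) fst"
  by (rule integ_bound[of _ 1]) auto

lemma int_snd: "(\<integral>z. snd z \<partial>(FS \<Otimes>\<^sub>M FB)) = (\<integral>x. x \<partial>FB)"
  using fub[OF snd_int] by simp

lemma int_fst_fun:
  fixes f :: "real \<Rightarrow> real"
  assumes "f \<in> borel_measurable borel"
  shows "(\<integral>z. f (fst z) \<partial>(FS \<Otimes>\<^sub>M FB)) = (\<integral>x. f x \<partial>FS)"
proof -
  have "(\<integral>x. f x \<partial>FS) = (\<integral>x. f x \<partial>(distr (FS \<Otimes>\<^sub>M FB) FS fst))"
    using P.M2.distr_pair_fst[of FS] by simp
  also have "\<dots> = (\<integral>z. f (fst z) \<partial>(FS \<Otimes>\<^sub>M FB))"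
    using assms measurable_cong_sets[OF sS refl, of borel] by (intro Bochner_Integration.integral_distr measurable_fst) auto
  finally show ?thesis by simp
qed

lemma int_const[simp]: "(\<integral>x. (c::real) \<partial>(FS \<Otimes>\<^sub>M FB)) = c"
  using P.prob_space by (simp add: space_pair_measure)

lemma aeS: "AE z in FS \<Otimes>\<^sub>M FB. 0 \<le> fst z"
  by (rule AE_lift) (use aS in \<open>auto intro: eventually_mono\<close>)
lemma aeB: "AE z in FS \<Otimes>\<^sub>M FB. 0 \<le> snd z"
  by (rule AE_lift) (use aB in \<open>auto intro: eventually_mono\<close>)

lemma ae_le:
  assumes G: "gains_from_reverse FS FB = 0"
  shows "AE z in FS \<Otimes>\<^sub>M FB. fst z \<le> snd z"
proof -
  have m: "(\<lambda>z. max (fst z - snd z) 0) \<in> borel_measurable (FS \<Otimes>\<^sub>M FB)" by measurable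
  have i: "integrable (FS \<Otimes>\<^sub>M FB) (\<lambda>z. max (fst z - snd z) (0::real))"
    by (rule integ_bound[OF m, where C=1]) auto
  have "(\<integral>z. max (fst z - snd z) 0 \<partial>(FS \<Otimes>\<^sub>M FB)) = gains_from_reverse FS FB"
    unfolding gains_from_reverse_def by (rule Bochner_Integration.integral_cong[OF refl]) (auto split: prod.splits)
  with G have "(\<integral>z. max (fst z - snd z) 0 \<partial>(FS \<Otimes>\<^sub>M FB)) = 0" by simp
  with integral_nonneg_eq_0_iff_AE[OF i] have "AE z in FS \<Otimes>\<^sub>M FB. max (fst z - snd z) 0 = 0" by simp
  then show ?thesis by (rule eventually_mono) simp
qed

abbreviation "EB \<equiv> (\<integral>x. x \<partial>FB)"
abbreviation "ES \<equiv> (\<integral>x. x \<partial>FS)"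

lemma int_fst: "(\<integral>z. fst z \<partial>(FS \<Otimes>\<^sub>M FB)) = ES"
  using int_fst_fun[of "\<lambda>x. x"] by simp

lemma ES_nonneg: "0 \<le> ES" using aS by (simp add: integral_nonneg_AE)
lemma EB_nonneg: "0 \<le> EB" using aB by (simp add: integral_nonneg_AE)

lemma ES_le_EB:
  assumes G: "gains_from_reverse FS FB = 0"
  shows "ES \<le> EB"
proof -
  have "(\<integral>z. fst z \<partial>(FS \<Otimes>\<^sub>M FB)) \<le> (\<integral>z. snd z \<partial>(FS \<Otimes>\<^sub>M FB))"
    by (rule integral_mono_AE[OF fst_int snd_int ae_le[OF G]])
  then show ?thesis using int_fst int_snd by simp
qed

lemma OPT_is:
  assumes G: "gains_from_reverse FS FB = 0"
  shows "OPT_W FS FB = EB"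
proof -
  have "OPT_W FS FB = (\<integral>z. snd z \<partial>(FS \<Otimes>\<^sub>M FB))"
    unfolding OPT_eq
    by (rule integral_cong_AE) (use ae_le[OF G] in \<open>auto elim!: eventually_mono\<close>)
  then show ?thesis using int_snd by simp
qed

lemma W_le:
  assumes G: "gains_from_reverse FS FB = 0"
  shows "W p FS FB \<le> EB"
proof -
  have "W p FS FB \<le> (\<integral>z. snd z \<partial>(FS \<Otimes>\<^sub>M FB))"
    unfolding W_eq
    by (rule integral_mono_AE[OF wv_int snd_int]) (use ae_le[OF G] in \<open>auto elim!: eventually_mono simp: wv_def\<close>)
  then show ?thesis using int_snd by simp
qed

lemma dich:
  assumes G: "gains_from_reverse FS FB = 0"
  shows "(AE s in FS. s \<le> t) \<or> (AE b in FB. t < b)"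
proof (rule disjCI)
  assume n: "\<not> (AE b in FB. t < b)"
  have A: "AE s in FS. AE b in FB. s \<le> b"
    using P.AE_pair[OF ae_le[OF G]] by simp
  have "\<forall>s. (AE b in FB. s \<le> b) \<longrightarrow> s \<le> t"
  proof (intro allI impI)
    fix s assume "AE b in FB. s \<le> b"
    show "s \<le> t"
    proof (rule ccontr)
      assume "\<not> s \<le> t"
      then have "AE b in FB. t < b" using \<open>AE b in FB. s \<le> b\<close> by (auto elim: eventually_mono)
      with n show False by simp
    qed
  qed
  with A show "AE s in FS. s \<le> t" by (auto elim: eventually_mono)
qed

lemma bdd:
  assumes G: "gains_from_reverse FS FB = 0"
  shows "\<exists>t. AE s in FS. s \<le> t"
proof (rule ccontr)
  assume "\<not> ?thesis"
  then have "AE b in FB. EB + 1 < b" using dich[OF G] by blast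
  then have "(\<integral>b. EB + 1 \<partial>FB) \<le> EB"
    by (intro integral_mono_AE iB) (auto elim: eventually_mono)
  then show False using P.M2.prob_space by simp
qed

lemma ind_int: "integrable (FS \<Otimes>\<^sub>M FB) (\<lambda>z. indicator {x::real. p < x} (fst z) :: real)"
  by (rule integ_bound[where C=1]) (auto simp: indicator_def)

lemma indS: "integrable FS (indicator {x::real. p < x} :: real \<Rightarrow> real)"
  by (rule integrable_real_indicator) (auto simp: P.M1.emeasure_eq_measure)

lemma int_ind: "(\<integral>z. indicator {x::real. p < x} (fst z) \<partial>(FS \<Otimes>\<^sub>M FB)) = measure FS {x. p < x}"
  using int_fst_fun[of "indicator {x. p < x}"] by simp

lemma lemA:
  assumes G: "gains_from_reverse FS FB = 0" and p: "0 \<le> p" "p \<le> c" and c: "AE s in FS. s \<le> c"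
  shows "EB - c + p * measure FS {x. p < x} \<le> W c FS FB"
proof -
  let ?M = "FS \<Otimes>\<^sub>M FB"
  let ?g = "\<lambda>z. snd z - c + p * indicator {x::real. p < x} (fst z)"
  have ig: "integrable ?M ?g"
    using snd_int ind_int by (intro Bochner_Integration.integrable_add Bochner_Integration.integrable_diff integrable_mult_right) auto
  have eg: "integral\<^sup>L ?M ?g = EB - c + p * measure FS {x. p < x}"
    using snd_int ind_int int_snd int_ind P.prob_space
    by (subst Bochner_Integration.integral_add) (auto intro!: Bochner_Integration.integrable_diff)
  have cM: "AE z in ?M. fst z \<le> c"
    by (rule AE_lift) (use c in \<open>auto intro: eventually_mono\<close>)
  have "integral\<^sup>L ?M ?g \<le> W c FS FB"
    unfolding W_eq
  proof (rule integral_mono_AE[OF ig wv_int])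
    show "AE z in ?M. ?g z \<le> wv c (fst z) (snd z)"
      using cM aeS ae_le[OF G]
    proof eventually_elim
      case (elim z)
      then show ?case using p by (auto simp: wv_def indicator_def)
    qed
  qed
  then show ?thesis using eg by simp
qed

lemma lemB:
  assumes G: "gains_from_reverse FS FB = 0" and p: "0 \<le> p" and b: "AE b in FB. p < b"
  shows "EB - measure FS {x. p < x} * (EB - p) \<le> W p FS FB"
proof -
  let ?M = "FS \<Otimes>\<^sub>M FB"
  let ?g = "\<lambda>z. snd z - (snd z - p) * indicator {x::real. p < x} (fst z)"
  have mg: "?g \<in> borel_measurable ?M" by measurable
  have ig: "integrable ?M ?g"
    by (rule integ_bound[OF mg, where C="2 + 2 * \<bar>p\<bar>"]) (auto simp: indicator_def algebra_simps)
  have inner: "(\<integral>b. ?g (s, b) \<partial>FB) = EB - (EB - p) * indicator {x::real. p < x} s" for s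
  proof -
    have "(\<integral>b. ?g (s, b) \<partial>FB) = (\<integral>b. b * (1 - indicator {x::real. p < x} s) + p * indicator {x::real. p < x} s \<partial>FB)"
      by (rule Bochner_Integration.integral_cong[OF refl]) (simp add: algebra_simps)
    also have "\<dots> = EB * (1 - indicator {x::real. p < x} s) + p * indicator {x::real. p < x} s"
      using iB P.M2.prob_space by (subst Bochner_Integration.integral_add) auto
    finally show ?thesis by (simp add: algebra_simps)
  qed
  have eg: "integral\<^sup>L ?M ?g = EB - measure FS {x. p < x} * (EB - p)"
  proof -
    have "integral\<^sup>L ?M ?g = (\<integral>s. EB - (EB - p) * indicator {x::real. p < x} s \<partial>FS)"
      using fub[OF ig] inner by simp
    also have "\<dots> = EB - (EB - p) * measure FS {x. p < x}"
      using P.M1.prob_space indS by (subst Bochner_Integration.integral_diff) auto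
    finally show ?thesis by simp
  qed
  have bM: "AE z in ?M. p < snd z"
    by (rule AE_lift) (use b in \<open>auto intro: AE_I2\<close>)
  have "integral\<^sup>L ?M ?g \<le> W p FS FB"
    unfolding W_eq
  proof (rule integral_mono_AE[OF ig wv_int])
    show "AE z in ?M. ?g z \<le> wv p (fst z) (snd z)"
      using bM ae_le[OF G]
    proof eventually_elim
      case (elim z)
      then show ?case using p by (auto simp: wv_def indicator_def)
    qed
  qed
  then show ?thesis using eg by simp
qed

lemma near:
  assumes G: "gains_from_reverse FS FB = 0" and d: "0 < \<delta>"
  shows "\<exists>p\<ge>0. 3/4 * EB - \<delta> \<le> W p FS FB"
proof -
  obtain t0 where t0: "AE s in FS. s \<le> t0" using bdd[OF G] by blast
  define K where "K k \<longleftrightarrow> (AE s in FS. s \<le> real k * \<delta>)" for k :: nat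
  have "K (nat \<lceil>t0 / \<delta>\<rceil>)"
  proof -
    have "t0 / \<delta> \<le> real (nat \<lceil>t0 / \<delta>\<rceil>)" by linarith
    then have "t0 \<le> real (nat \<lceil>t0 / \<delta>\<rceil>) * \<delta>" using d by (simp add: field_simps)
    then show ?thesis unfolding K_def using t0 by (auto elim: eventually_mono)
  qed
  then have ex: "\<exists>k. K k" by blast
  define k where "k = (LEAST k. K k)"
  have Kk: "K k" unfolding k_def using ex by (rule LeastI_ex)
  show ?thesis
  proof (cases k)
    case 0
    then have "AE s in FS. s \<le> 0" using Kk unfolding K_def by simp
    from lemA[OF G _ _ this, of 0] have "EB \<le> W 0 FS FB" by simp
    then show ?thesis using EB_nonneg d by (intro exI[of _ 0]) auto
  next
    case (Suc j)
    then have "\<not> K j" unfolding k_def using not_less_Least[of j K] by auto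
    then have b: "AE b in FB. real j * \<delta> < b" using dich[OF G] unfolding K_def by blast
    define p where "p = real j * \<delta>"
    define q where "q = measure FS {x. p < x}"
    have p0: "0 \<le> p" using d by (simp add: p_def)
    have c: "AE s in FS. s \<le> p + \<delta>" using Kk Suc unfolding K_def p_def by (simp add: algebra_simps)
    have A: "EB - (p + \<delta>) + p * q \<le> W (p + \<delta>) FS FB"
      using lemA[OF G p0 _ c] d unfolding q_def by simp
    have B: "EB - q * (EB - p) \<le> W p FS FB"
      using lemB[OF G p0] b unfolding q_def p_def by simp
    have q01: "0 \<le> q" "q \<le> 1" unfolding q_def using P.M1.prob_le_1 by auto
    from arith_key[OF p0 q01 EB_nonneg] show ?thesis
    proof
      assume "p * (1 - q) \<le> EB / 4"
      then show ?thesis using A p0 d by (intro exI[of _ "p + \<delta>"]) (auto simp: algebra_simps)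
    next
      assume "q * (EB - p) \<le> EB / 4"
      then show ?thesis using B p0 d by (intro exI[of _ p]) (auto simp: algebra_simps)
    qed
  qed
qed

end

lemma sup_ge:
  assumes FF: "FF \<in> admissible"
  shows "3/4 \<le> (SUP p \<in> {0::real..}. W p (fst FF) (snd FF) / OPT_W (fst FF) (snd FF))"
proof -
  obtain FS FB where FF: "FF = (FS, FB)" by (cases FF)
  have dS: "nonneg_L1_dist FS" and dB: "nonneg_L1_dist FB" and G: "gains_from_reverse FS FB = 0"
    and nz: "\<not> ((\<integral>x. x \<partial>FS) = 0 \<and> (\<integral>x. x \<partial>FB) = 0)"
    using assms unfolding FF admissible_def by auto
  define E where "E = (\<integral>x. x \<partial>FB)"
  have E0: "0 < E" using ES_le_EB[OF dS dB G] ES_nonneg[OF dS dB] nz unfolding E_def by linarith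
  have O: "OPT_W FS FB = E" unfolding E_def by (rule OPT_is[OF dS dB G])
  have le1: "W p FS FB / OPT_W FS FB \<le> 1" for p
  proof -
    have "W p FS FB \<le> E" using W_le[OF dS dB G] unfolding E_def .
    then show ?thesis unfolding O using E0 by simp
  qed
  have bdd: "bdd_above ((\<lambda>p. W p FS FB / OPT_W FS FB) ` {0..})"
    using le1 by (intro bdd_aboveI[of _ 1]) blast
  have "3/4 \<le> (SUP p \<in> {0::real..}. W p FS FB / OPT_W FS FB) + e" if e: "0 < e" for e
  proof -
    have "0 < e * E" using e E0 by simp
    from near[OF dS dB G this] obtain p where p: "0 \<le> p" "3/4 * E - e * E \<le> W p FS FB"
      unfolding E_def by blast
    have "(3/4 - e) * E \<le> W p FS FB" using p(2) by (simp add: algebra_simps)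
    then have "3/4 - e \<le> W p FS FB / E" using E0 by (simp add: le_divide_eq)
    also have "\<dots> = W p FS FB / OPT_W FS FB" unfolding O ..
    also have "\<dots> \<le> (SUP p \<in> {0::real..}. W p FS FB / OPT_W FS FB)"
      using bdd p(1) by (intro cSUP_upper) auto
    finally show ?thesis by simp
  qed
  then have "3/4 \<le> (SUP p \<in> {0::real..}. W p FS FB / OPT_W FS FB)" by (rule field_le_epsilon)
  then show ?thesis unfolding FF by simp
qed
lemma distr_bern_dist:
  fixes f :: "bool \<Rightarrow> real"
  assumes "0 \<le> a" "a \<le> 1" "\<And>x. 0 \<le> f x"
  shows "nonneg_L1_dist (distr (measure_pmf (bernoulli_pmf a)) borel f)"
  unfolding nonneg_L1_dist_def
proof (intro conjI)
  show "sets (distr (measure_pmf (bernoulli_pmf a)) borel f) = sets borel" by simp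
  show "prob_space (distr (measure_pmf (bernoulli_pmf a)) borel f)"
    by (rule prob_space.prob_space_distr) (auto simp: prob_space_measure_pmf)
  show "AE x in distr (measure_pmf (bernoulli_pmf a)) borel f. 0 \<le> x"
    using assms by (subst AE_distr_iff) auto
  show "integrable (distr (measure_pmf (bernoulli_pmf a)) borel f) (\<lambda>x. x)"
    by (subst integrable_distr_eq) (auto intro: integrable_measure_pmf_finite)
qed

lemma int_distr_bern:
  fixes f :: "bool \<Rightarrow> real" and g :: "real \<Rightarrow> real"
  assumes "0 \<le> a" "a \<le> 1" "g \<in> borel_measurable borel"
  shows "(\<integral>x. g x \<partial>(distr (measure_pmf (bernoulli_pmf a)) borel f)) = g (f True) * a + g (f False) * (1 - a)"
  using assms by (subst Bochner_Integration.integral_distr) auto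

definition FSx :: "real measure" where
  "FSx = distr (measure_pmf (bernoulli_pmf (1/2))) borel (\<lambda>x. if x then 1 else 0)"
definition FBx :: "real \<Rightarrow> real measure" where
  "FBx \<beta> = distr (measure_pmf (bernoulli_pmf \<beta>)) borel (\<lambda>x. if x then 1 + 1/\<beta> else 1)"

context
  fixes \<beta> :: real
  assumes b0: "0 < \<beta>" and b1: "\<beta> < 1"
begin

lemma dSx: "nonneg_L1_dist FSx"
  unfolding FSx_def by (rule distr_bern_dist) auto
lemma dBx: "nonneg_L1_dist (FBx \<beta>)"
  unfolding FBx_def using b0 b1 by (intro distr_bern_dist) auto

lemma sSx[measurable_cong]: "sets FSx = sets borel" unfolding FSx_def by simp
lemma sBx[measurable_cong]: "sets (FBx \<beta>) = sets borel" unfolding FBx_def by simp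

lemma wvb[measurable]: "(\<lambda>b. wv p s b) \<in> borel_measurable borel" unfolding wv_def by measurable
lemma wvs[measurable]: "(\<lambda>s. wv p s b) \<in> borel_measurable borel" unfolding wv_def by measurable

lemma sets_M: "sets (FSx \<Otimes>\<^sub>M FBx \<beta>) = sets (borel \<Otimes>\<^sub>M borel)"
  by (rule sets_pair_measure_cong) (simp_all add: sSx sBx)

lemma intS: fixes g :: "real \<Rightarrow> real" shows "g \<in> borel_measurable borel \<Longrightarrow> (\<integral>x. g x \<partial>FSx) = g 1 * (1/2) + g 0 * (1/2)"
  unfolding FSx_def by (subst int_distr_bern) auto
lemma intB: fixes g :: "real \<Rightarrow> real" shows "g \<in> borel_measurable borel \<Longrightarrow> (\<integral>x. g x \<partial>FBx \<beta>) = g (1 + 1/\<beta>) * \<beta> + g 1 * (1 - \<beta>)"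
  unfolding FBx_def using b0 b1 by (subst int_distr_bern) auto

lemma EBx: "(\<integral>x. x \<partial>FBx \<beta>) = 2"
  using b0 by (subst intB) (auto simp: field_simps)
lemma ESx: "(\<integral>x. x \<partial>FSx) = 1/2"
  by (subst intS) auto

lemma Gx: "gains_from_reverse FSx (FBx \<beta>) = 0"
proof -
  let ?M = "FSx \<Otimes>\<^sub>M FBx \<beta>"
  have m: "(\<lambda>z. max (fst z - snd z) 0) \<in> borel_measurable ?M"
    unfolding measurable_cong_sets[OF sets_M refl] by measurable
  have i: "integrable ?M (\<lambda>z. max (fst z - snd z) (0::real))"
    by (rule integ_bound[OF dSx dBx m, where C=1]) auto
  have "gains_from_reverse FSx (FBx \<beta>) = (\<integral>z. max (fst z - snd z) 0 \<partial>?M)"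
    unfolding gains_from_reverse_def by (rule Bochner_Integration.integral_cong[OF refl]) (auto split: prod.splits)
  also have "\<dots> = (\<integral>s. (\<integral>b. max (s - b) 0 \<partial>FBx \<beta>) \<partial>FSx)"
    using fub[OF dSx dBx i] by simp
  also have "\<dots> = (\<integral>s. max (s - (1 + 1/\<beta>)) 0 * \<beta> + max (s - 1) 0 * (1 - \<beta>) \<partial>FSx)"
    by (rule Bochner_Integration.integral_cong[OF refl]) (subst intB, auto)
  also have "\<dots> = 0"
  proof -
    have h: "0 < 1/\<beta>" using b0 by simp
    have h2: "- 1 \<le> 1/\<beta>" using h by linarith
    show ?thesis by (subst intS) (use b0 in \<open>auto simp: max_def h2\<close>)
  qed
  finally show ?thesis .
qed

lemma admx: "(FSx, FBx \<beta>) \<in> admissible"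
  unfolding admissible_def using dSx dBx Gx ESx by auto

lemma Wx: "W p FSx (FBx \<beta>) \<le> 3/2 + \<beta>/2"
proof -
  let ?M = "FSx \<Otimes>\<^sub>M FBx \<beta>"
  have "W p FSx (FBx \<beta>) = (\<integral>s. (\<integral>b. wv p s b \<partial>FBx \<beta>) \<partial>FSx)"
    using W_eq[OF dSx dBx] fub[OF dSx dBx wv_int[OF dSx dBx]] by simp
  also have "\<dots> = (\<integral>s. wv p s (1 + 1/\<beta>) * \<beta> + wv p s 1 * (1 - \<beta>) \<partial>FSx)"
    by (rule Bochner_Integration.integral_cong[OF refl]) (rule intB, rule wvb)
  also have "\<dots> = (wv p 1 (1 + 1/\<beta>) * \<beta> + wv p 1 1 * (1 - \<beta>)) * (1/2)
      + (wv p 0 (1 + 1/\<beta>) * \<beta> + wv p 0 1 * (1 - \<beta>)) * (1/2)"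
    by (rule intS, intro borel_measurable_add borel_measurable_times wvs borel_measurable_const)
  also have "\<dots> \<le> 3/2 + \<beta>/2"
  proof -
    have bx: "(1 + 1/\<beta>) * \<beta> = \<beta> + 1" using b0 by (simp add: field_simps)
    have x1: "1 < 1 + 1/\<beta>" using b0 by simp
    show ?thesis
      using b0 b1 x1 bx by (auto simp: wv_def algebra_simps)
  qed
  finally show ?thesis .
qed

lemma sup_x: "(SUP p \<in> {0::real..}. W p FSx (FBx \<beta>) / OPT_W FSx (FBx \<beta>)) \<le> 3/4 + \<beta>/4"
proof (rule cSUP_least)
  show "{0::real..} \<noteq> {}" by auto
  fix p :: real
  have O: "OPT_W FSx (FBx \<beta>) = 2" using OPT_is[OF dSx dBx Gx] EBx by simp
  show "W p FSx (FBx \<beta>) / OPT_W FSx (FBx \<beta>) \<le> 3/4 + \<beta>/4"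
    unfolding O using Wx[of p] by simp
qed

end

theorem proposition9:
  shows "(INF FF \<in> admissible.
            SUP p \<in> {0::real..}. W p (fst FF) (snd FF) / OPT_W (fst FF) (snd FF)) = 3 / 4"
proof (rule antisym)
  have ne: "admissible \<noteq> {}" using admx[of "1/2"] by auto
  show "3/4 \<le> (INF FF \<in> admissible.
            SUP p \<in> {0::real..}. W p (fst FF) (snd FF) / OPT_W (fst FF) (snd FF))"
    by (rule cINF_greatest[OF ne]) (rule sup_ge)
  have bdd: "bdd_below ((\<lambda>FF. SUP p \<in> {0::real..}. W p (fst FF) (snd FF) / OPT_W (fst FF) (snd FF)) ` admissible)"
    using sup_ge by (intro bdd_belowI[of _ "3/4"]) auto
  have "(INF FF \<in> admissible.
            SUP p \<in> {0::real..}. W p (fst FF) (snd FF) / OPT_W (fst FF) (snd FF)) \<le> 3/4 + e"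
    if e: "0 < e" for e
  proof -
    define \<beta> where "\<beta> = min (1/2) e"
    have b0: "0 < \<beta>" and b1: "\<beta> < 1" and be: "\<beta> \<le> e" using e by (auto simp: \<beta>_def)
    have "(INF FF \<in> admissible.
            SUP p \<in> {0::real..}. W p (fst FF) (snd FF) / OPT_W (fst FF) (snd FF))
          \<le> (SUP p \<in> {0::real..}. W p FSx (FBx \<beta>) / OPT_W FSx (FBx \<beta>))"
      using cINF_lower[OF bdd admx[OF b0 b1]] by simp
    also have "\<dots> \<le> 3/4 + \<beta>/4" by (rule sup_x[OF b0 b1])
    also have "\<dots> \<le> 3/4 + e" using be e by simp
    finally show ?thesis .
  qed
  then show "(INF FF \<in> admissible.
            SUP p \<in> {0::real..}. W p (fst FF) (snd FF) / OPT_W (fst FF) (snd FF)) \<le> 3/4"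
    by (rule field_le_epsilon)
qed

end
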